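(* In the Boosted HiPPA setting of the context, let $\{x^k\}$ and $\{\bar x^k\}$ be generated by the algorithm and let $\bar y^k\in\operatorname{prox}^p_{\gamma\varphi}(x^k)$ satisfy $\|\bar x^k-\bar y^k\|=\operatorname{dist}(\bar x^k,\operatorname{prox}^p_{\gamma\varphi}(x^k))$. Then: (a) $\sum_{k=0}^\infty\|R^{\varepsilon_k}_\gamma(x^k)\|^p<\infty$ and $R^{\varepsilon_k}_\gamma(x^k)\to0$; (b) $\{x^k\},\{\bar x^k\},\{\bar y^k\}$ have the same cluster points (if any), and each cluster point is a proximal fixed point, i.e., a point $\hat x$ with $\hat x\in\operatorname{prox}^p_{\gamma\varphi}(\hat x)$; (c) there is a finite $\mathcal{F}\in\mathbb{R}$ with $\lim_k\varphi^p_\gamma(x^k)=\lim_k\varphi(\bar y^k)=\lim_k\varphi^{p,\varepsilon_k}_\gamma(x^k)=\lim_k\varphi(\bar x^k)=\mathcal{F}$; moreover, if $\hat x$ is a cluster point of $\{x^k\}$ then $\varphi(\hat x)=\varphi^p_\gamma(\hat x)=\mathcal{F}$; finally, if $\{x^k\}$ is bounded then $\lim_k\varphi^p_\gamma(\bar y^k)=\mathcal{F}$; (d) $\varphi$ and $\varphi^p_\gamma$ are constant on the set of cluster points of $\{x^k\}$ (if any).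
   Context: Standing setting. $p>1$; $\varphi:\mathbb{R}^n\to\mathbb{R}\cup\{+\infty\}$ is proper, lsc and bounded from below. For $\gamma>0$: $\operatorname{prox}^p_{\gamma\varphi}(x):=\operatorname{argmin}_y\big(\varphi(y)+\frac1{p\gamma}\|x-y\|^p\big)$, $\varphi^p_\gamma(x):=\inf_y\big(\varphi(y)+\frac1{p\gamma}\|x-y\|^p\big)$. $\{\varepsilon_k\},\{\delta_k\}$ are non-increasing positive sequences with $\sum_k\varepsilon_k<\infty$, $\delta_k\downarrow0$. Prox approximation: for each index $j$ and point $x$ needed, a point $P_j(x)$ (written $\operatorname{prox}^{p,\varepsilon_j}_{\gamma\varphi}(x)$) is available with $\operatorname{dist}(P_j(x),\operatorname{prox}^p_{\gamma\varphi}(x))<\delta_j$ and $\varphi(P_j(x))+\frac1{p\gamma}\|x-P_j(x)\|^p<\varphi^p_\gamma(x)+\varepsilon_j$. Define $\varphi^{p,\varepsilon_j}_\gamma(x):=\varphi(P_j(x))+\frac1{p\gamma}\|x-P_j(x)\|^p$, $R^{\varepsilon_j}_\gamma(x):=x-P_j(x)$. Boosted HiPPA: choose $x^0$, $\gamma>0$, $\sigma\in(0,\frac1{p\gamma})$, $\vartheta\in(0,1)$. At iteration $k$: $\bar x^k:=P_k(x^k)$; choose a direction $d^k$; for $m=0,1,\dots$ set $\alpha_k=\vartheta^m$, $\hat x^{k+1}=(1-\alpha_k)\bar x^k+\alpha_k(x^k+d^k)$, until $\varphi^{p,\varepsilon_{k+1}}_\gamma(\hat x^{k+1})\le\varphi^{p,\varepsilon_k}_\gamma(x^k)-\sigma\|R^{\varepsilon_k}_\gamma(x^k)\|^p+\varepsilon_k+\varepsilon_{k+1}$;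 set $x^{k+1}=\hat x^{k+1}$. *)

theory Defs
  imports "HOL-Analysis.Analysis"
begin

(* Extended-real valued functions phi : 'a => real \<union> {+\<infinity>}  are modelled as 'a => ereal
   with the value -\<infinity> excluded (part of properness). *)

definition proper_fun :: "('a \<Rightarrow> ereal) \<Rightarrow> bool" where
  "proper_fun \<phi> \<longleftrightarrow> (\<exists>x. \<phi> x \<noteq> \<infinity>) \<and> (\<forall>x. \<phi> x \<noteq> -\<infinity>)"

definition lsc_fun :: "('a::topological_space \<Rightarrow> ereal) \<Rightarrow> bool" where
  "lsc_fun \<phi> \<longleftrightarrow> (\<forall>x. \<phi> x \<le> Liminf (at x) \<phi>)"

definition bounded_below_fun :: "('a \<Rightarrow> ereal) \<Rightarrow> bool" where
  "bounded_below_fun \<phi> \<longleftrightarrow> (\<exists>b::real. \<forall>x. ereal b \<le> \<phi> x)"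

definition prox_obj :: "('a::real_normed_vector \<Rightarrow> ereal) \<Rightarrow> real \<Rightarrow> real \<Rightarrow> 'a \<Rightarrow> 'a \<Rightarrow> ereal" where
  "prox_obj \<phi> p \<gamma> x y = \<phi> y + ereal (norm (x - y) powr p / (p * \<gamma>))"

definition hprox :: "('a::real_normed_vector \<Rightarrow> ereal) \<Rightarrow> real \<Rightarrow> real \<Rightarrow> 'a \<Rightarrow> 'a set" where
  "hprox \<phi> p \<gamma> x = {y. \<forall>z. prox_obj \<phi> p \<gamma> x y \<le> prox_obj \<phi> p \<gamma> x z}"

definition hmoreau :: "('a::real_normed_vector \<Rightarrow> ereal) \<Rightarrow> real \<Rightarrow> real \<Rightarrow> 'a \<Rightarrow> ereal" where
  "hmoreau \<phi> p \<gamma> x = (INF y. prox_obj \<phi> p \<gamma> x y)"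

definition inexact_prox :: "('a::real_normed_vector \<Rightarrow> ereal) \<Rightarrow> real \<Rightarrow> real \<Rightarrow> real \<Rightarrow> real \<Rightarrow> 'a \<Rightarrow> 'a \<Rightarrow> bool" where
  "inexact_prox \<phi> p \<gamma> \<epsilon> \<delta> x u \<longleftrightarrow>
     infdist u (hprox \<phi> p \<gamma> x) < \<delta> \<and> prox_obj \<phi> p \<gamma> x u < hmoreau \<phi> p \<gamma> x + ereal \<epsilon>"

definition cluster_pt :: "(nat \<Rightarrow> 'a::topological_space) \<Rightarrow> 'a \<Rightarrow> bool" where
  "cluster_pt s c \<longleftrightarrow> (\<exists>r. strict_mono r \<and> (s \<circ> r) \<longlonglongrightarrow> c)"

end

theory Submission imports Defs begin

lemma lsc_seq:
  fixes \<phi> :: "'a::metric_space \<Rightarrow> ereal"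
  assumes lsc: "lsc_fun \<phi>" and s: "s \<longlonglongrightarrow> c" and l: "(\<lambda>n. \<phi> (s n)) \<longlonglongrightarrow> L"
  shows "\<phi> c \<le> L"
proof (rule ccontr)
  assume "\<not> \<phi> c \<le> L"
  hence "L < \<phi> c" by simp
  then obtain M where LM: "L < M" and Mc: "M < \<phi> c" using dense by blast
  have "M < Liminf (at c) \<phi>" using Mc lsc unfolding lsc_fun_def by (meson less_le_trans)
  hence "eventually (\<lambda>y. \<phi> y > M) (at c)" by (rule less_LiminfD)
  then obtain e where e: "e > 0" and he: "\<And>y. y \<noteq> c \<Longrightarrow> dist y c < e \<Longrightarrow> \<phi> y > M"
    unfolding eventually_at by auto
  have ev1: "eventually (\<lambda>n. dist (s n) c < e) sequentially" using s e by (rule tendstoD)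
  have ev2: "eventually (\<lambda>n. \<phi> (s n) < M) sequentially" using l LM by (rule order_tendstoD)
  from eventually_conj[OF ev1 ev2] obtain n where "dist (s n) c < e" "\<phi> (s n) < M"
    using eventually_sequentially by auto
  thus False using he Mc by (cases "s n = c") force+
qed

lemma cluster_shift:
  fixes s t :: "nat \<Rightarrow> 'a::real_normed_vector"
  assumes "(\<lambda>k. s k - t k) \<longlonglongrightarrow> 0" and "cluster_pt s c"
  shows "cluster_pt t c"
proof -
  obtain r where r: "strict_mono r" "(s \<circ> r) \<longlonglongrightarrow> c" using assms(2) unfolding cluster_pt_def by blast
  have "((\<lambda>k. s k - t k) \<circ> r) \<longlonglongrightarrow> 0" using LIMSEQ_subseq_LIMSEQ[OF assms(1) r(1)] .
  hence "(\<lambda>n. (s \<circ> r) n - ((\<lambda>k. s k - t k) \<circ> r) n) \<longlonglongrightarrow> c - 0"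
    using r(2) by (intro tendsto_diff)
  hence "(t \<circ> r) \<longlonglongrightarrow> c" by (simp add: comp_def)
  thus ?thesis using r(1) unfolding cluster_pt_def by blast
qed

lemma powr_split_ineq:
  fixes u v p l :: real
  assumes "p \<ge> 1" "0 < l" "l < 1" "u \<ge> 0" "v \<ge> 0"
  shows "(u + v) powr p \<le> l powr (1 - p) * u powr p + (1 - l) powr (1 - p) * v powr p"
proof -
  have A: "w powr (1 - p) \<ge> 1" if "0 < w" "w \<le> 1" for w :: real
  proof -
    have "w powr (1 - p) = (1 / w) powr (p - 1)" using that by (simp add: powr_divide powr_minus_divide[symmetric] powr_minus)
    also have "\<dots> \<ge> 1" using that assms by (intro ge_one_powr_ge_zero) auto
    finally show ?thesis .
  qed
  have B: "l * (u / l) powr p = l powr (1 - p) * u powr p"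
    using assms by (simp add: powr_divide powr_diff)
  have C: "(1 - l) * (v / (1 - l)) powr p = (1 - l) powr (1 - p) * v powr p"
    using assms by (simp add: powr_divide powr_diff)
  show ?thesis
  proof (cases "u = 0 \<or> v = 0")
    case True
    then show ?thesis
    proof
      assume "u = 0"
      have "v powr p \<le> (1 - l) powr (1 - p) * v powr p"
        using mult_right_mono[OF A[of "1 - l"], of "v powr p"] assms by simp
      thus ?thesis using \<open>u = 0\<close> assms by simp
    next
      assume "v = 0"
      have "u powr p \<le> l powr (1 - p) * u powr p"
        using mult_right_mono[OF A[of l], of "u powr p"] assms by simp
      thus ?thesis using \<open>v = 0\<close> assms by simp
    qed
  next
    case False
    hence pos: "u > 0" "v > 0" using assms by auto
    have "(\<lambda>x. x powr p) ((1 - (1 - l)) *\<^sub>R (u / l) + (1 - l) *\<^sub>R (v / (1 - l)))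
        \<le> (1 - (1 - l)) * (u / l) powr p + (1 - l) * (v / (1 - l)) powr p"
      using pos assms by (intro convex_onD[OF powr_convex]) auto
    moreover have "(1 - (1 - l)) *\<^sub>R (u / l) + (1 - l) *\<^sub>R (v / (1 - l)) = u + v" using assms by simp
    ultimately show ?thesis using B C by simp
  qed
qed
theorem theorem10:
  fixes \<phi> :: "'a::euclidean_space \<Rightarrow> ereal"
    and p \<gamma> \<sigma> \<theta> :: real
    and \<epsilon> \<delta> :: "nat \<Rightarrow> real"
    and P :: "nat \<Rightarrow> 'a \<Rightarrow> 'a"
    and x d ybar :: "nat \<Rightarrow> 'a"
    and mk :: "nat \<Rightarrow> nat"
  defines "xbar \<equiv> (\<lambda>k. P k (x k))"
    and "\<phi>eps \<equiv> (\<lambda>j z. prox_obj \<phi> p \<gamma> z (P j z))"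
    and "trial \<equiv> (\<lambda>k m. (1 - \<theta> ^ m) *\<^sub>R P k (x k) + \<theta> ^ m *\<^sub>R (x k + d k))"
  assumes p: "p > 1"
    and \<phi>_proper: "proper_fun \<phi>" and \<phi>_lsc: "lsc_fun \<phi>" and \<phi>_bdd: "bounded_below_fun \<phi>"
    and \<gamma>: "\<gamma> > 0" and \<sigma>: "0 < \<sigma>" "\<sigma> < 1 / (p * \<gamma>)" and \<theta>: "0 < \<theta>" "\<theta> < 1"
    and \<epsilon>_pos: "\<And>k. \<epsilon> k > 0" and \<epsilon>_noninc: "\<And>k. \<epsilon> (Suc k) \<le> \<epsilon> k" and \<epsilon>_sum: "summable \<epsilon>"
    and \<delta>_pos: "\<And>k. \<delta> k > 0" and \<delta>_noninc: "\<And>k. \<delta> (Suc k) \<le> \<delta> k" and \<delta>_lim: "\<delta> \<longlonglongrightarrow> 0"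
    and P_iter: "\<And>k. inexact_prox \<phi> p \<gamma> (\<epsilon> k) (\<delta> k) (x k) (P k (x k))"
    and P_trial: "\<And>k m. m \<le> mk k \<Longrightarrow>
          inexact_prox \<phi> p \<gamma> (\<epsilon> (Suc k)) (\<delta> (Suc k)) (trial k m) (P (Suc k) (trial k m))"
    and ls_fail: "\<And>k m. m < mk k \<Longrightarrow>
          \<not> (\<phi>eps (Suc k) (trial k m) \<le> \<phi>eps k (x k)
                 - ereal (\<sigma> * norm (x k - P k (x k)) powr p) + ereal (\<epsilon> k) + ereal (\<epsilon> (Suc k)))"
    and ls_accept: "\<And>k. \<phi>eps (Suc k) (trial k (mk k)) \<le> \<phi>eps k (x k)
                 - ereal (\<sigma> * norm (x k - P k (x k)) powr p) + ereal (\<epsilon> k) + ereal (\<epsilon> (Suc k))"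
    and x_step: "\<And>k. x (Suc k) = trial k (mk k)"
    and ybar_in: "\<And>k. ybar k \<in> hprox \<phi> p \<gamma> (x k)"
    and ybar_dist: "\<And>k. norm (xbar k - ybar k) = infdist (xbar k) (hprox \<phi> p \<gamma> (x k))"
  shows
    "(summable (\<lambda>k. norm (x k - xbar k) powr p) \<and> (\<lambda>k. x k - xbar k) \<longlonglongrightarrow> 0)
     \<and> ({c. cluster_pt x c} = {c. cluster_pt xbar c} \<and> {c. cluster_pt x c} = {c. cluster_pt ybar c}
        \<and> (\<forall>c. cluster_pt x c \<longrightarrow> c \<in> hprox \<phi> p \<gamma> c))
     \<and> (\<exists>F::real.
          (\<lambda>k. hmoreau \<phi> p \<gamma> (x k)) \<longlonglongrightarrow> ereal F
        \<and> (\<lambda>k. \<phi> (ybar k)) \<longlonglongrightarrow> ereal F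
        \<and> (\<lambda>k. \<phi>eps k (x k)) \<longlonglongrightarrow> ereal F
        \<and> (\<lambda>k. \<phi> (xbar k)) \<longlonglongrightarrow> ereal F
        \<and> (\<forall>c. cluster_pt x c \<longrightarrow> \<phi> c = ereal F \<and> hmoreau \<phi> p \<gamma> c = ereal F)
        \<and> (bounded (range x) \<longrightarrow> (\<lambda>k. hmoreau \<phi> p \<gamma> (ybar k)) \<longlonglongrightarrow> ereal F))
     \<and> (\<forall>c1 c2. cluster_pt x c1 \<and> cluster_pt x c2 \<longrightarrow>
          \<phi> c1 = \<phi> c2 \<and> hmoreau \<phi> p \<gamma> c1 = hmoreau \<phi> p \<gamma> c2)"
proof -
  obtain b :: real where b: "\<And>y. ereal b \<le> \<phi> y" using \<phi>_bdd unfolding bounded_below_fun_def by blast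
  obtain z0 where z0: "\<phi> z0 \<noteq> \<infinity>" using \<phi>_proper unfolding proper_fun_def by blast
  have ninf: "\<And>y. \<phi> y \<noteq> -\<infinity>" using \<phi>_proper unfolding proper_fun_def by blast
  have pg: "p * \<gamma> > 0" using p \<gamma> by simp
  have term_nn: "\<And>u v. norm (u - v) powr p / (p*\<gamma>) \<ge> 0" using pg by simp
  have po_ge: "\<phi> z \<le> prox_obj \<phi> p \<gamma> y z" for y z
    unfolding prox_obj_def using term_nn[of y z] by (intro add_increasing2) auto
  have hm_le: "hmoreau \<phi> p \<gamma> y \<le> prox_obj \<phi> p \<gamma> y z" for y z
    unfolding hmoreau_def by (rule INF_lower) simp
  have hm_ge: "ereal b \<le> hmoreau \<phi> p \<gamma> y" for y
    unfolding hmoreau_def by (rule INF_greatest) (use b po_ge order_trans in blast)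
  have hm_fin: "hmoreau \<phi> p \<gamma> y \<noteq> \<infinity>" for y
  proof -
    have "prox_obj \<phi> p \<gamma> y z0 \<noteq> \<infinity>" using z0 unfolding prox_obj_def by simp
    thus ?thesis using hm_le[of y z0] by auto
  qed
  define M where "M y = real_of_ereal (hmoreau \<phi> p \<gamma> y)" for y
  have hmM: "hmoreau \<phi> p \<gamma> y = ereal (M y)" for y
    using hm_fin[of y] hm_ge[of y] unfolding M_def by (cases "hmoreau \<phi> p \<gamma> y") auto
  have M_ge: "b \<le> M y" for y using hm_ge[of y] hmM[of y] by simp
  define fr where "fr z = real_of_ereal (\<phi> z)" for z
  have phi_real: "\<phi> z = ereal (fr z)" if "\<phi> z \<noteq> \<infinity>" for z
    using that ninf[of z] unfolding fr_def by (cases "\<phi> z") auto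
  have fr_ge: "b \<le> fr z" if "\<phi> z \<noteq> \<infinity>" for z using b[of z] phi_real[OF that] by simp
  have po_real: "prox_obj \<phi> p \<gamma> y z = ereal (fr z + norm (y - z) powr p / (p*\<gamma>))"
    if "\<phi> z \<noteq> \<infinity>" for y z
    using phi_real[OF that] unfolding prox_obj_def by simp
  have fin_of_lt: "\<phi> z \<noteq> \<infinity>" if "prox_obj \<phi> p \<gamma> y z \<noteq> \<infinity>" for y z
    using that unfolding prox_obj_def by auto
  have M_le: "M y \<le> fr z + norm (y - z) powr p / (p*\<gamma>)" if "\<phi> z \<noteq> \<infinity>" for y z
    using hm_le[of y z] po_real[OF that, of y] hmM[of y] by simp

  have xb1: "prox_obj \<phi> p \<gamma> (x k) (xbar k) < hmoreau \<phi> p \<gamma> (x k) + ereal (\<epsilon> k)"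
    and xb2: "infdist (xbar k) (hprox \<phi> p \<gamma> (x k)) < \<delta> k" for k
    using P_iter[of k] unfolding inexact_prox_def xbar_def by auto
  have xb_fin: "\<phi> (xbar k) \<noteq> \<infinity>" for k
  proof -
    have "prox_obj \<phi> p \<gamma> (x k) (xbar k) \<noteq> \<infinity>" using xb1[of k] hmM[of "x k"] by auto
    thus ?thesis by (rule fin_of_lt)
  qed
  define r where "r k = norm (x k - xbar k) powr p" for k
  define a where "a k = fr (xbar k) + r k / (p*\<gamma>)" for k
  have r_nn: "r k \<ge> 0" for k unfolding r_def by simp
  have eps_eq: "\<phi>eps k (x k) = ereal (a k)" for k
    unfolding \<phi>eps_def a_def r_def using po_real[OF xb_fin[of k], of "x k"] unfolding xbar_def by simp
  have a_lt: "a k < M (x k) + \<epsilon> k" for k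
    using xb1[of k] po_real[OF xb_fin[of k], of "x k"] hmM[of "x k"] unfolding a_def r_def by simp
  have a_ge: "M (x k) \<le> a k" for k
    using M_le[OF xb_fin[of k], of "x k"] unfolding a_def r_def by simp
  have a_geb: "b \<le> a k" for k using M_ge[of "x k"] a_ge[of k] by linarith

  have yb_eq: "prox_obj \<phi> p \<gamma> (x k) (ybar k) = hmoreau \<phi> p \<gamma> (x k)" for k
  proof (rule antisym)
    show "prox_obj \<phi> p \<gamma> (x k) (ybar k) \<le> hmoreau \<phi> p \<gamma> (x k)"
      unfolding hmoreau_def using ybar_in[of k] unfolding hprox_def by (auto intro: INF_greatest)
  qed (rule hm_le)
  have yb_fin: "\<phi> (ybar k) \<noteq> \<infinity>" for k
  proof -
    have "prox_obj \<phi> p \<gamma> (x k) (ybar k) \<noteq> \<infinity>" using yb_eq[of k] hmM[of "x k"] by auto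
    thus ?thesis by (rule fin_of_lt)
  qed
  define dy where "dy k = norm (x k - ybar k) powr p" for k
  have M_yb: "M (x k) = fr (ybar k) + dy k / (p*\<gamma>)" for k
    using yb_eq[of k] po_real[OF yb_fin[of k], of "x k"] hmM[of "x k"] unfolding dy_def by simp

  define e where "e k = \<epsilon> k + \<epsilon> (Suc k)" for k
  have descent: "a (Suc k) \<le> a k - \<sigma> * r k + e k" for k
  proof -
    have "\<phi>eps (Suc k) (x (Suc k)) \<le> \<phi>eps k (x k) - ereal (\<sigma> * r k) + ereal (\<epsilon> k) + ereal (\<epsilon> (Suc k))"
      using ls_accept[of k] x_step[of k] by (simp add: r_def xbar_def)
    thus ?thesis unfolding eps_eq e_def by simp
  qed
  have e_nn: "e k \<ge> 0" for k using \<epsilon>_pos[of k] \<epsilon>_pos[of "Suc k"] unfolding e_def by simp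
  have e_sum: "summable e" unfolding e_def
    using \<epsilon>_sum by (intro summable_add) (auto simp: summable_Suc_iff)
  define se where "se = suminf e"
  have sum_e: "(\<Sum>k<n. e k) \<le> se" for n unfolding se_def
    using e_sum e_nn by (intro sum_le_suminf) auto
  have partial: "\<sigma> * (\<Sum>k<n. r k) + a n \<le> a 0 + (\<Sum>k<n. e k)" for n
  proof (induction n)
    case (Suc n)
    then show ?case using descent[of n] by (simp add: algebra_simps)
  qed simp
  have r_sum: "summable r"
  proof (rule summableI_nonneg_bounded)
    fix n
    have "\<sigma> * (\<Sum>k<n. r k) \<le> a 0 + se - b" using partial[of n] sum_e[of n] a_geb[of n] by linarith
    thus "(\<Sum>k<n. r k) \<le> (a 0 + se - b) / \<sigma>" using \<sigma> by (simp add: field_simps)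
  qed (rule r_nn)
  define g where "g n = a n - (\<Sum>k<n. e k)" for n
  have g_dec: "decseq g"
  proof (rule decseq_SucI)
    fix n
    have "0 \<le> \<sigma> * r n" using \<sigma> r_nn[of n] by simp
    thus "g (Suc n) \<le> g n" using descent[of n] unfolding g_def by simp
  qed
  have g_ge: "\<forall>i. b - se \<le> g i"
  proof
    fix i show "b - se \<le> g i" using a_geb[of i] sum_e[of i] unfolding g_def by linarith
  qed
  obtain L where L: "g \<longlonglongrightarrow> L" using decseq_convergent[OF g_dec g_ge] by blast
  define F where "F = L + se"
  have a_lim: "a \<longlonglongrightarrow> F"
  proof -
    have "(\<lambda>n. g n + (\<Sum>k<n. e k)) \<longlonglongrightarrow> L + se"
      using L summable_LIMSEQ[OF e_sum] unfolding se_def by (intro tendsto_add)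
    thus ?thesis unfolding F_def g_def by simp
  qed
  have eps0: "\<epsilon> \<longlonglongrightarrow> 0" using summable_LIMSEQ_zero[OF \<epsilon>_sum] .
  have r0: "r \<longlonglongrightarrow> 0" using summable_LIMSEQ_zero[OF r_sum] .
  have nx: "(\<lambda>k. norm (x k - xbar k)) \<longlonglongrightarrow> 0"
  proof -
    have eq: "norm (x k - xbar k) = r k powr (1 / p)" for k
      unfolding r_def using p by (simp add: powr_powr)
    have "(\<lambda>k. r k powr (1 / p)) \<longlonglongrightarrow> 0"
      using r0 p r_nn by (intro tendsto_zero_powrI) auto
    thus ?thesis unfolding eq .
  qed
  have ny: "(\<lambda>k. norm (x k - ybar k)) \<longlonglongrightarrow> 0"
  proof (rule tendsto_sandwich[of "\<lambda>_. 0" _ _ "\<lambda>k. norm (x k - xbar k) + \<delta> k"])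
    show "\<forall>\<^sub>F k in sequentially. norm (x k - ybar k) \<le> norm (x k - xbar k) + \<delta> k"
    proof (intro always_eventually allI)
      fix k
      have "norm (x k - ybar k) \<le> norm (x k - xbar k) + norm (xbar k - ybar k)"
        using norm_triangle_ineq[of "x k - xbar k" "xbar k - ybar k"] by simp
      thus "norm (x k - ybar k) \<le> norm (x k - xbar k) + \<delta> k" using ybar_dist[of k] xb2[of k] by simp
    qed
    show "(\<lambda>k. norm (x k - xbar k) + \<delta> k) \<longlonglongrightarrow> 0" using tendsto_add[OF nx \<delta>_lim] by simp
  qed auto
  have dy0: "dy \<longlonglongrightarrow> 0" unfolding dy_def using ny p by (intro tendsto_zero_powrI) auto
  have Mx_lim: "(\<lambda>k. M (x k)) \<longlonglongrightarrow> F"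
  proof (rule tendsto_sandwich[of "\<lambda>k. a k - \<epsilon> k" _ _ a])
    show "\<forall>\<^sub>F k in sequentially. a k - \<epsilon> k \<le> M (x k)" using a_lt by (simp add: less_imp_le add.commute diff_le_eq)
    show "\<forall>\<^sub>F k in sequentially. M (x k) \<le> a k" using a_ge by simp
    show "(\<lambda>k. a k - \<epsilon> k) \<longlonglongrightarrow> F" using tendsto_diff[OF a_lim eps0] by simp
  qed (rule a_lim)
  have fxb_lim: "(\<lambda>k. fr (xbar k)) \<longlonglongrightarrow> F"
  proof -
    have "(\<lambda>k. a k - r k / (p*\<gamma>)) \<longlonglongrightarrow> F - 0 / (p*\<gamma>)" using a_lim r0 pg by (intro tendsto_intros) auto
    thus ?thesis unfolding a_def by simp
  qed
  have fyb_lim: "(\<lambda>k. fr (ybar k)) \<longlonglongrightarrow> F"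
  proof -
    have "(\<lambda>k. M (x k) - dy k / (p*\<gamma>)) \<longlonglongrightarrow> F - 0 / (p*\<gamma>)" using Mx_lim dy0 pg by (intro tendsto_intros) auto
    thus ?thesis unfolding M_yb by simp
  qed
  have L1: "(\<lambda>k. hmoreau \<phi> p \<gamma> (x k)) \<longlonglongrightarrow> ereal F" unfolding hmM using Mx_lim by simp
  have L2: "(\<lambda>k. \<phi> (ybar k)) \<longlonglongrightarrow> ereal F" unfolding phi_real[OF yb_fin] using fyb_lim by simp
  have L3: "(\<lambda>k. \<phi>eps k (x k)) \<longlonglongrightarrow> ereal F" unfolding eps_eq using a_lim by simp
  have L4: "(\<lambda>k. \<phi> (xbar k)) \<longlonglongrightarrow> ereal F" unfolding phi_real[OF xb_fin] using fxb_lim by simp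

  have d1: "(\<lambda>k. x k - xbar k) \<longlonglongrightarrow> 0" using nx by (simp add: tendsto_norm_zero_iff)
  have d2: "(\<lambda>k. x k - ybar k) \<longlonglongrightarrow> 0" using ny by (simp add: tendsto_norm_zero_iff)
  have d1': "(\<lambda>k. xbar k - x k) \<longlonglongrightarrow> 0" using tendsto_minus[OF d1] by simp
  have d2': "(\<lambda>k. ybar k - x k) \<longlonglongrightarrow> 0" using tendsto_minus[OF d2] by simp
  have C1: "{c. cluster_pt x c} = {c. cluster_pt xbar c}"
    using cluster_shift[OF d1] cluster_shift[OF d1'] by blast
  have C2: "{c. cluster_pt x c} = {c. cluster_pt ybar c}"
    using cluster_shift[OF d2] cluster_shift[OF d2'] by blast
  have clus: "\<phi> c = ereal F \<and> hmoreau \<phi> p \<gamma> c = ereal F \<and> c \<in> hprox \<phi> p \<gamma> c" if cx: "cluster_pt x c" for c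
  proof -
    obtain q where q: "strict_mono q" "(x \<circ> q) \<longlonglongrightarrow> c" using cx unfolding cluster_pt_def by blast
    have "(\<lambda>n. (x \<circ> q) n - ((\<lambda>k. x k - ybar k) \<circ> q) n) \<longlonglongrightarrow> c - 0"
      using q(2) LIMSEQ_subseq_LIMSEQ[OF d2 q(1)] by (intro tendsto_diff)
    hence yq: "(\<lambda>n. ybar (q n)) \<longlonglongrightarrow> c" by (simp add: comp_def)
    have "(\<lambda>n. \<phi> (ybar (q n))) \<longlonglongrightarrow> ereal F" using LIMSEQ_subseq_LIMSEQ[OF L2 q(1)] by (simp add: comp_def)
    from lsc_seq[OF \<phi>_lsc yq this] have up: "\<phi> c \<le> ereal F" .
    have low: "ereal F \<le> prox_obj \<phi> p \<gamma> c z" for z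
    proof (cases "\<phi> z = \<infinity>")
      case True thus ?thesis unfolding prox_obj_def by simp
    next
      case False
      have xq: "(\<lambda>n. x (q n)) \<longlonglongrightarrow> c" using q(2) by (simp add: comp_def)
      have "(\<lambda>n. fr z + norm (x (q n) - z) powr p / (p*\<gamma>)) \<longlonglongrightarrow> fr z + norm (c - z) powr p / (p*\<gamma>)"
        using xq p pg by (intro tendsto_intros) auto
      moreover have "(\<lambda>n. M (x (q n))) \<longlonglongrightarrow> F" using LIMSEQ_subseq_LIMSEQ[OF Mx_lim q(1)] by (simp add: comp_def)
      ultimately have "F \<le> fr z + norm (c - z) powr p / (p*\<gamma>)"
        using M_le[OF False] by (intro LIMSEQ_le[of "\<lambda>n. M (x (q n))" _ "\<lambda>n. fr z + norm (x (q n) - z) powr p / (p*\<gamma>)"]) auto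
      thus ?thesis using po_real[OF False] by simp
    qed
    have pcc: "prox_obj \<phi> p \<gamma> c c = \<phi> c" unfolding prox_obj_def using p by simp
    have phc: "\<phi> c = ereal F" using up low[of c] pcc by simp
    have "hmoreau \<phi> p \<gamma> c = ereal F"
    proof (rule antisym)
      show "hmoreau \<phi> p \<gamma> c \<le> ereal F" using hm_le[of c c] pcc phc by simp
      show "ereal F \<le> hmoreau \<phi> p \<gamma> c" unfolding hmoreau_def by (rule INF_greatest) (rule low)
    qed
    moreover have "c \<in> hprox \<phi> p \<gamma> c" unfolding hprox_def using low pcc phc by simp
    ultimately show ?thesis using phc by simp
  qed

  have F_ge: "b \<le> F" using Mx_lim M_ge by (intro LIMSEQ_le_const[of "\<lambda>k. M (x k)"]) auto
  have Myb_le: "M (ybar k) \<le> fr (ybar k)" for k using M_le[OF yb_fin[of k], of "ybar k"] p by simp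
  have Myb_low: "eventually (\<lambda>k. F - \<eta> < M (ybar k)) sequentially" if "\<eta> > 0" for \<eta>
  proof -
    define t where "t = min (1/2) (\<eta> / (2 * (F - b + 1)))"
    have "\<eta> / (2 * (F - b + 1)) > 0" using that F_ge by (intro divide_pos_pos) auto
    hence t0: "0 < t" "t \<le> 1/2" unfolding t_def by (simp_all add: min_def)
    have tF: "t * (F - b) < \<eta>"
    proof -
      have h1: "t * (F - b) \<le> \<eta> / (2 * (F - b + 1)) * (F - b)" using F_ge unfolding t_def
        by (intro mult_right_mono) auto
      have q: "(F - b) / (2 * (F - b + 1)) < 1" using F_ge by (simp add: field_simps)
      have "\<eta> / (2 * (F - b + 1)) * (F - b) = \<eta> * ((F - b) / (2 * (F - b + 1)))" by simp
      also have "\<dots> < \<eta> * 1" by (rule mult_strict_left_mono[OF q that])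
      finally have "\<eta> / (2 * (F - b + 1)) * (F - b) < \<eta>" by simp
      thus ?thesis using h1 by linarith
    qed
    define l where "l = (1 - t) powr (1 / (p - 1))"
    have l0: "0 < l" unfolding l_def using t0 by simp
    have l1: "l < 1" unfolding l_def using t0 p powr_less_mono2[of "1/(p-1)" "1 - t" 1] by simp
    define K where "K = l powr (1 - p)"
    define C where "C = (1 - l) powr (1 - p)"
    have K_eq: "K = 1 / (1 - t)"
    proof -
      have "K = (1 - t) powr ((1 / (p - 1)) * (1 - p))" unfolding K_def l_def by (simp add: powr_powr)
      also have "(1 / (p - 1)) * (1 - p) = -1" using p by (simp add: field_simps)
      finally show ?thesis using t0 by (simp add: powr_neg_one)
    qed
    define T where "T k = (M (x k) - C * dy k / (p*\<gamma>) - b) * (1 - t) + b" for k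
    have T_le: "T k \<le> M (ybar k)" for k
    proof -
      have "ereal (T k) \<le> hmoreau \<phi> p \<gamma> (ybar k)" unfolding hmoreau_def
      proof (rule INF_greatest)
        fix z
        show "ereal (T k) \<le> prox_obj \<phi> p \<gamma> (ybar k) z"
        proof (cases "\<phi> z = \<infinity>")
          case True thus ?thesis unfolding prox_obj_def by simp
        next
          case False
          define nyz where "nyz = norm (ybar k - z) powr p"
          have m1: "M (x k) \<le> fr z + norm (x k - z) powr p / (p*\<gamma>)" using M_le[OF False] .
          have "norm (x k - z) \<le> norm (ybar k - z) + norm (x k - ybar k)"
            using norm_triangle_ineq[of "ybar k - z" "x k - ybar k"] by simp
          hence "norm (x k - z) powr p \<le> (norm (ybar k - z) + norm (x k - ybar k)) powr p"
            using p by (intro powr_mono2) auto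
          also have "\<dots> \<le> K * nyz + C * dy k" unfolding K_def C_def nyz_def dy_def
            using p l0 l1 by (intro powr_split_ineq) auto
          finally have m2: "norm (x k - z) powr p \<le> K * nyz + C * dy k" .
          have "M (x k) - C * dy k / (p*\<gamma>) - b \<le> fr z - b + K * nyz / (p*\<gamma>)"
          proof -
            have "norm (x k - z) powr p / (p*\<gamma>) \<le> (K * nyz + C * dy k) / (p*\<gamma>)"
              using m2 pg by (intro divide_right_mono) auto
            also have "\<dots> = K * nyz / (p*\<gamma>) + C * dy k / (p*\<gamma>)" by (rule add_divide_distrib)
            finally show ?thesis using m1 by linarith
          qed
          hence "(M (x k) - C * dy k / (p*\<gamma>) - b) * (1 - t) \<le> (fr z - b + K * nyz / (p*\<gamma>)) * (1 - t)"
            using t0 by (intro mult_right_mono) auto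
          also have "\<dots> = (fr z - b) * (1 - t) + (K * (1 - t)) * (nyz / (p*\<gamma>))" by (simp add: algebra_simps)
          also have "K * (1 - t) = 1" using t0 unfolding K_eq by simp
          also have "(fr z - b) * (1 - t) + 1 * (nyz / (p*\<gamma>)) \<le> (fr z - b) + nyz / (p*\<gamma>)"
            using t0 fr_ge[OF False] mult_left_mono[of "1 - t" 1 "fr z - b"] by simp
          finally have "T k \<le> fr z + nyz / (p*\<gamma>)" unfolding T_def by simp
          thus ?thesis using po_real[OF False] unfolding nyz_def by simp
        qed
      qed
      thus ?thesis using hmM[of "ybar k"] by simp
    qed
    have "T \<longlonglongrightarrow> (F - C * 0 / (p*\<gamma>) - b) * (1 - t) + b"
      unfolding T_def using Mx_lim dy0 pg by (intro tendsto_intros) auto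
    moreover have "(F - C * 0 / (p*\<gamma>) - b) * (1 - t) + b > F - \<eta>" using tF by (simp add: algebra_simps)
    ultimately have "eventually (\<lambda>k. F - \<eta> < T k) sequentially" by (rule order_tendstoD)
    thus ?thesis by (rule eventually_mono) (meson T_le less_le_trans)
  qed
  have Myb_lim: "(\<lambda>k. M (ybar k)) \<longlonglongrightarrow> F"
  proof (rule order_tendstoI)
    fix y assume "y < F"
    thus "eventually (\<lambda>k. y < M (ybar k)) sequentially" using Myb_low[of "F - y"] by simp
  next
    fix y assume "F < y"
    hence "eventually (\<lambda>k. fr (ybar k) < y) sequentially" by (rule order_tendstoD(2)[OF fyb_lim])
    thus "eventually (\<lambda>k. M (ybar k) < y) sequentially" by (rule eventually_mono) (meson Myb_le le_less_trans)
  qed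
  have L6: "(\<lambda>k. hmoreau \<phi> p \<gamma> (ybar k)) \<longlonglongrightarrow> ereal F" unfolding hmM using Myb_lim by simp

  have partA: "summable (\<lambda>k. norm (x k - xbar k) powr p) \<and> (\<lambda>k. x k - xbar k) \<longlonglongrightarrow> 0"
    using r_sum d1 unfolding r_def by simp
  have B: "\<forall>c. cluster_pt x c \<longrightarrow> c \<in> hprox \<phi> p \<gamma> c" using clus by blast
  have Cc: "\<forall>c. cluster_pt x c \<longrightarrow> \<phi> c = ereal F \<and> hmoreau \<phi> p \<gamma> c = ereal F" using clus by blast
  have D: "\<forall>c1 c2. cluster_pt x c1 \<and> cluster_pt x c2 \<longrightarrow>
          \<phi> c1 = \<phi> c2 \<and> hmoreau \<phi> p \<gamma> c1 = hmoreau \<phi> p \<gamma> c2"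
  proof (intro allI impI)
    fix c1 c2 assume "cluster_pt x c1 \<and> cluster_pt x c2"
    thus "\<phi> c1 = \<phi> c2 \<and> hmoreau \<phi> p \<gamma> c1 = hmoreau \<phi> p \<gamma> c2" using Cc by simp
  qed
  have E: "\<exists>F::real.
          (\<lambda>k. hmoreau \<phi> p \<gamma> (x k)) \<longlonglongrightarrow> ereal F
        \<and> (\<lambda>k. \<phi> (ybar k)) \<longlonglongrightarrow> ereal F
        \<and> (\<lambda>k. \<phi>eps k (x k)) \<longlonglongrightarrow> ereal F
        \<and> (\<lambda>k. \<phi> (xbar k)) \<longlonglongrightarrow> ereal F
        \<and> (\<forall>c. cluster_pt x c \<longrightarrow> \<phi> c = ereal F \<and> hmoreau \<phi> p \<gamma> c = ereal F)
        \<and> (bounded (range x) \<longrightarrow> (\<lambda>k. hmoreau \<phi> p \<gamma> (ybar k)) \<longlonglongrightarrow> ereal F)"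
    using L1 L2 L3 L4 Cc L6 by blast
  show ?thesis
    using partA C1 C2 B E D by blast
qed

end
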